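(* Let $\mathfrak{n}\in A_+$ and $\gamma=\begin{pmatrix}a&b\\c&d\end{pmatrix}\in\mathrm{GL}_2(A)$. Then there exist $u\in K_\infty$ and $\gamma_0\in\Gamma_0(\mathfrak{n})$ such that $\gamma_0\gamma e_0=e_g$, where $$g=w_\mathfrak{n}\begin{pmatrix}\pi_\infty^{\deg\mathfrak{n}+2\delta_\mathfrak{n}(c,d)+\epsilon_\mathfrak{n}(c,d)}&u\\0&1\end{pmatrix}\begin{pmatrix}0&1\\\pi_\infty&0\end{pmatrix}^{\epsilon_\mathfrak{n}(c,d)},\qquad w_\mathfrak{n}=\begin{pmatrix}0&-1\\\mathfrak{n}&0\end{pmatrix}.$$
   Context: $\mathbb{F}_q$ a finite field, $A=\mathbb{F}_q[\theta]$, $A_+$ the monic polynomials, $\deg0=-\infty$; $\pi_\infty=\theta^{-1}$, $K_\infty=\mathbb{F}_q((\pi_\infty))$, $O_\infty=\mathbb{F}_q[[\pi_\infty]]$, $\mathcal{I}_\infty$ the matrices in $\mathrm{GL}_2(O_\infty)$ with lower-left entry in $\pi_\infty O_\infty$. Oriented edges of the Bruhat–Tits tree: cosets $\mathrm{GL}_2(K_\infty)/K_\infty^\times\mathcal{I}_\infty$, with $e_g$ the coset of $g$, left action of $\mathrm{GL}_2(K_\infty)$, and $e_0=e_I$. $\Gamma_0(\mathfrak{n})=\{\begin{pmatrix}a&b\\c&d\end{pmatrix}\in\mathrm{GL}_2(A):\mathfrak{n}\mid c\}$. For coprime $c,d\in A$ (as for the bottom row of $\gamma$), $\delta_\mathfrak{n}(c,d)=\min\{\max(\deg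 x,\deg y): x,y\in A,\ \gcd(cx+dy,\mathfrak{n})=1\}$, and $\epsilon_\mathfrak{n}(c,d)=0$ if there exist $x_0,y_0\in A$ with $\deg y_0<\deg x_0=\delta_\mathfrak{n}(c,d)$ and $\gcd(cx_0+dy_0,\mathfrak{n})=1$, and $\epsilon_\mathfrak{n}(c,d)=1$ otherwise. *)

theory Defs
  imports "HOL-Computational_Algebra.Polynomial" "HOL-Computational_Algebra.Formal_Laurent_Series"
    "HOL-Computational_Algebra.Polynomial_Factorial"
begin

text \<open>Setting: the finite field F_q is a type 'a of class {field, finite};
  A = F_q[theta] is 'a poly; K_inf = F_q((pi_inf)) is 'a fls with pi_inf = fls_X,
  so that theta = fls_X_inv.\<close>

datatype 'b mat2 = Mat2 (m11: 'b) (m12: 'b) (m21: 'b) (m22: 'b)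

definition mmul :: "'b::semiring_1 mat2 \<Rightarrow> 'b mat2 \<Rightarrow> 'b mat2" where
  "mmul X Y = Mat2 (m11 X * m11 Y + m12 X * m21 Y) (m11 X * m12 Y + m12 X * m22 Y)
                   (m21 X * m11 Y + m22 X * m21 Y) (m21 X * m12 Y + m22 X * m22 Y)"

definition mdet :: "'b::comm_ring_1 mat2 \<Rightarrow> 'b" where
  "mdet X = m11 X * m22 X - m12 X * m21 X"

definition mid :: "'b::{zero,one} mat2" where
  "mid = Mat2 1 0 0 1"

definition mscale :: "'b::times \<Rightarrow> 'b mat2 \<Rightarrow> 'b mat2" where
  "mscale l X = Mat2 (l * m11 X) (l * m12 X) (l * m21 X) (l * m22 X)"

fun mpow :: "'b::semiring_1 mat2 \<Rightarrow> nat \<Rightarrow> 'b mat2" where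
  "mpow X 0 = mid"
| "mpow X (Suc k) = mmul (mpow X k) X"

definition embA :: "'a::field poly \<Rightarrow> 'a fls" where
  "embA p = poly (map_poly fls_const p) fls_X_inv"

definition emb_mat :: "'a::field poly mat2 \<Rightarrow> 'a fls mat2" where
  "emb_mat X = Mat2 (embA (m11 X)) (embA (m12 X)) (embA (m21 X)) (embA (m22 X))"

definition O_inf :: "'a::field fls set" where
  "O_inf = {x. x = 0 \<or> 0 \<le> fls_subdegree x}"

definition piO_inf :: "'a::field fls set" where
  "piO_inf = {x. x = 0 \<or> 1 \<le> fls_subdegree x}"

definition Iwahori :: "'a::field fls mat2 set" where
  "Iwahori = {k. m11 k \<in> O_inf \<and> m12 k \<in> O_inf \<and> m21 k \<in> piO_inf \<and> m22 k \<in> O_inf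
                \<and> mdet k \<noteq> 0 \<and> fls_subdegree (mdet k) = 0}"

text \<open>Oriented edge e_g: the coset g K_inf^\<times> I_inf; left action of GL_2(K_inf).\<close>
definition edge :: "'a::field fls mat2 \<Rightarrow> 'a fls mat2 set" where
  "edge g = {mmul g (mscale l k) | l k. l \<noteq> 0 \<and> k \<in> Iwahori}"

definition act :: "'a::field fls mat2 \<Rightarrow> 'a fls mat2 set \<Rightarrow> 'a fls mat2 set" where
  "act h E = mmul h ` E"

definition e0 :: "'a::field fls mat2 set" where
  "e0 = edge mid"

definition GL2A :: "'a::field poly mat2 set" where
  "GL2A = {X. is_unit (mdet X)}"

definition Gamma0 :: "'a::field poly \<Rightarrow> 'a poly mat2 set" where
  "Gamma0 n = {X. X \<in> GL2A \<and> n dvd m21 X}"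

text \<open>delta_n(c,d) and epsilon_n(c,d).  The minimum is over pairs (x,y) \<noteq> (0,0); for such pairs max (degree x) (degree y) agrees with the
  max of degrees under the convention deg 0 = -\<infinity>.\<close>
definition delta_n :: "'a::field_gcd poly \<Rightarrow> 'a poly \<Rightarrow> 'a poly \<Rightarrow> nat" where
  "delta_n n c d = (LEAST m. \<exists>x y. (x, y) \<noteq> (0, 0) \<and> gcd (c * x + d * y) n = 1
                                   \<and> max (degree x) (degree y) = m)"

text \<open>deg y0 < deg x0 = delta with deg 0 = -\<infinity>: x0 \<noteq> 0, degree x0 = delta,
  and (y0 = 0 or degree y0 < degree x0).\<close>
definition eps_n :: "'a::field_gcd poly \<Rightarrow> 'a poly \<Rightarrow> 'a poly \<Rightarrow> nat" where
  "eps_n n c d = (if (\<exists>x0 y0. x0 \<noteq> 0 \<and> degree x0 = delta_n n c d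
                     \<and> (y0 = 0 \<or> degree y0 < degree x0) \<and> gcd (c * x0 + d * y0) n = 1)
                  then 0 else 1)"

definition w_n :: "'a::field poly \<Rightarrow> 'a fls mat2" where
  "w_n n = Mat2 0 (-1) (embA n) 0"

end

theory Submission
  imports Defs
begin


lemma embA_pCons: "embA (pCons a p) = fls_const a + fls_X_inv * embA (p::'a::field poly)"
  unfolding embA_def by (simp add: map_poly_pCons)

lemma embA_0[simp]: "embA (0::'a::field poly) = 0"
  unfolding embA_def by simp

lemma embA_const[simp]: "embA [:c:] = fls_const (c::'a::field)"
  using embA_pCons[of c 0] by simp

lemma embA_1[simp]: "embA (1::'a::field poly) = 1"
  using embA_const[of "1::'a"] by (simp add: one_pCons)

lemma embA_add[simp]: "embA (p + q) = embA p + embA (q::'a::field poly)"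
proof (induction p arbitrary: q)
  case 0 then show ?case by simp
next
  case (pCons a p)
  show ?case
  proof (cases q rule: pCons_cases)
    case (pCons b q')
    then show ?thesis using pCons.IH[of q'] by (simp add: embA_pCons fls_plus_const[symmetric] algebra_simps)
  qed
qed

lemma embA_uminus[simp]: "embA (- p) = - embA (p::'a::field poly)"
proof -
  have "embA (- p) + embA p = 0" by (simp flip: embA_add)
  then show ?thesis by (simp add: eq_neg_iff_add_eq_0)
qed

lemma embA_diff[simp]: "embA (p - q) = embA p - embA (q::'a::field poly)"
  using embA_add[of p "-q"] by simp

lemma embA_smult: "embA (smult a q) = fls_const a * embA (q::'a::field poly)"
  by (induction q) (simp_all add: embA_pCons algebra_simps fls_plus_const[symmetric])

lemma embA_mult[simp]: "embA (p * q) = embA p * embA (q::'a::field poly)"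
proof (induction p)
  case 0 then show ?case by simp
next
  case (pCons a p)
  have "pCons a p * q = smult a q + pCons 0 (p * q)" by simp
  then show ?case using pCons by (simp add: embA_smult embA_pCons algebra_simps)
qed

lemma embA_nth: "fls_nth (embA p) j = (if j \<le> 0 then coeff p (nat (-j)) else 0)"
proof (induction p arbitrary: j)
  case 0 then show ?case by simp
next
  case (pCons a p)
  show ?case
    by (auto simp add: embA_pCons fls_X_inv_times_conv_shift pCons coeff_pCons split: nat.split
          intro!: arg_cong[where f="coeff p"])
qed


lemma embA_eq0_iff[simp]: "embA p = 0 \<longleftrightarrow> p = (0::'a::field poly)"
proof
  assume "embA p = 0"
  then have "coeff p i = 0" for i using embA_nth[of p "- int i"] by simp
  then show "p = 0" by (simp add: poly_eqI)
qed simp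

lemma embA_subdegree: "p \<noteq> 0 \<Longrightarrow> fls_subdegree (embA p) = - int (degree (p::'a::field poly))"
  by (rule fls_subdegree_eqI) (auto simp: embA_nth coeff_eq_0)



lemma mmul_assoc: "mmul (mmul X Y) Z = mmul X (mmul Y (Z::'b::comm_ring_1 mat2))"
  by (simp add: mmul_def algebra_simps)

lemma mmul_mid_right[simp]: "mmul X mid = (X::'b::comm_ring_1 mat2)"
  by (cases X) (simp add: mmul_def mid_def)

lemma mmul_mid_left[simp]: "mmul mid X = (X::'b::comm_ring_1 mat2)"
  by (cases X) (simp add: mmul_def mid_def)

lemma mmul_mscale: "mmul (mscale a X) (mscale b Y) = mscale (a*b) (mmul X (Y::'b::comm_ring_1 mat2))"
  by (simp add: mmul_def mscale_def algebra_simps)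

lemma mdet_mmul: "mdet (mmul X Y) = mdet X * mdet (Y::'b::comm_ring_1 mat2)"
  by (simp add: mmul_def mdet_def algebra_simps)

lemma O_add: "x \<in> O_inf \<Longrightarrow> y \<in> O_inf \<Longrightarrow> x + y \<in> (O_inf::'a::field fls set)"
  unfolding O_inf_def using fls_plus_subdegree[of x y] by fastforce

lemma O_mult: "x \<in> O_inf \<Longrightarrow> y \<in> O_inf \<Longrightarrow> x * y \<in> (O_inf::'a::field fls set)"
  unfolding O_inf_def by (cases "x = 0"; cases "y = 0") auto

lemma O_uminus: "x \<in> O_inf \<Longrightarrow> - x \<in> (O_inf::'a::field fls set)"
  unfolding O_inf_def by auto

lemma piO_add: "x \<in> piO_inf \<Longrightarrow> y \<in> piO_inf \<Longrightarrow> x + y \<in> (piO_inf::'a::field fls set)"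
  unfolding piO_inf_def using fls_plus_subdegree[of x y] by fastforce

lemma piO_O: "x \<in> piO_inf \<Longrightarrow> x \<in> (O_inf::'a::field fls set)"
  unfolding piO_inf_def O_inf_def by auto

lemma piO_mult1: "x \<in> piO_inf \<Longrightarrow> y \<in> O_inf \<Longrightarrow> x * y \<in> (piO_inf::'a::field fls set)"
  unfolding O_inf_def piO_inf_def by (cases "x = 0"; cases "y = 0") auto

lemma piO_mult2: "x \<in> O_inf \<Longrightarrow> y \<in> piO_inf \<Longrightarrow> x * y \<in> (piO_inf::'a::field fls set)"
  unfolding O_inf_def piO_inf_def by (cases "x = 0"; cases "y = 0") auto

lemma piO_uminus: "x \<in> piO_inf \<Longrightarrow> - x \<in> (piO_inf::'a::field fls set)"
  unfolding piO_inf_def by auto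

lemma O_inv: "fls_subdegree x = 0 \<Longrightarrow> inverse x \<in> (O_inf::'a::field fls set)"
  unfolding O_inf_def by auto

lemma Iwahori_mult: "K \<in> Iwahori \<Longrightarrow> L \<in> Iwahori \<Longrightarrow> mmul K L \<in> (Iwahori :: 'a::field fls mat2 set)"
proof -
  assume K: "K \<in> Iwahori" and L: "L \<in> Iwahori"
  have d: "mdet (mmul K L) = mdet K * mdet L" by (rule mdet_mmul)
  have e: "m11 (mmul K L) = m11 K * m11 L + m12 K * m21 L" "m12 (mmul K L) = m11 K * m12 L + m12 K * m22 L"
    "m21 (mmul K L) = m21 K * m11 L + m22 K * m21 L" "m22 (mmul K L) = m21 K * m12 L + m22 K * m22 L"
    by (simp_all add: mmul_def)
  have p: "m21 K * m11 L + m22 K * m21 L \<in> piO_inf"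
    using K L unfolding Iwahori_def by (intro piO_add[OF piO_mult1 piO_mult2]) auto
  have o: "m21 K \<in> O_inf" "m21 L \<in> O_inf" using K L unfolding Iwahori_def by (auto intro: piO_O)
  show ?thesis using K L p o unfolding Iwahori_def mem_Collect_eq d e
    by (auto intro!: O_add O_mult)
qed

definition minv :: "'a::field fls mat2 \<Rightarrow> 'a fls mat2" where
  "minv K = mscale (inverse (mdet K)) (Mat2 (m22 K) (-m12 K) (-m21 K) (m11 K))"

lemma mmul_mscale_right: "mmul X (mscale a Y) = mscale a (mmul X (Y::'b::comm_ring_1 mat2))"
  by (simp add: mmul_def mscale_def algebra_simps)

lemma mdet_mscale: "mdet (mscale a X) = a^2 * mdet (X::'b::comm_ring_1 mat2)"
  by (simp add: mdet_def mscale_def algebra_simps power2_eq_square)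

lemma minv_right: "mdet K \<noteq> 0 \<Longrightarrow> mmul K (minv K) = mid"
proof -
  assume d: "mdet K \<noteq> 0"
  have "mmul K (Mat2 (m22 K) (-m12 K) (-m21 K) (m11 K)) = Mat2 (mdet K) 0 0 (mdet K)"
    by (simp add: mmul_def mdet_def algebra_simps)
  then show ?thesis using d unfolding minv_def mmul_mscale_right by (simp add: mscale_def mid_def)
qed

lemma Iwahori_minv: "K \<in> Iwahori \<Longrightarrow> minv K \<in> (Iwahori :: 'a::field fls mat2 set)"
proof -
  assume K: "K \<in> Iwahori"
  then have d: "mdet K \<noteq> 0" "fls_subdegree (mdet K) = 0" by (auto simp: Iwahori_def)
  have dd: "mdet (minv K) = inverse (mdet K)"
  proof -
    have "mdet (Mat2 (m22 K) (-m12 K) (-m21 K) (m11 K)) = mdet K" by (simp add: mdet_def algebra_simps)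
    then show ?thesis using d by (simp add: minv_def mdet_mscale power2_eq_square field_simps)
  qed
  have e: "m11 (minv K) = inverse (mdet K) * m22 K" "m12 (minv K) = - (inverse (mdet K) * m12 K)"
    "m21 (minv K) = - (inverse (mdet K) * m21 K)" "m22 (minv K) = inverse (mdet K) * m11 K"
    by (simp_all add: minv_def mscale_def)
  show ?thesis using K d O_inv[OF d(2)] unfolding Iwahori_def mem_Collect_eq dd e
    by (auto intro!: O_mult piO_mult2 O_uminus piO_uminus)
qed

lemma edge_shift:
  assumes "l0 \<noteq> 0" "K \<in> Iwahori"
  shows "edge (mmul g (mscale l0 K)) = edge (g :: 'a::field fls mat2)"
proof
  show "edge (mmul g (mscale l0 K)) \<subseteq> edge g"
  proof
    fix Y assume "Y \<in> edge (mmul g (mscale l0 K))"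
    then obtain l k where Y: "Y = mmul (mmul g (mscale l0 K)) (mscale l k)" "l \<noteq> 0" "k \<in> Iwahori"
      unfolding edge_def by blast
    then have "Y = mmul g (mscale (l0 * l) (mmul K k))" by (simp add: mmul_assoc mmul_mscale)
    then show "Y \<in> edge g" unfolding edge_def using Y assms Iwahori_mult by fastforce
  qed
next
  show "edge g \<subseteq> edge (mmul g (mscale l0 K))"
  proof
    fix Y assume "Y \<in> edge g"
    then obtain l k where Y: "Y = mmul g (mscale l k)" "l \<noteq> 0" "k \<in> Iwahori"
      unfolding edge_def by blast
    have dK: "mdet K \<noteq> 0" using assms by (auto simp: Iwahori_def)
    have "mmul (mscale l0 K) (mscale (l / l0) (mmul (minv K) k)) = mscale l k"
      using assms(1) by (simp add: mmul_mscale flip: mmul_assoc add: minv_right[OF dK])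
    then have "Y = mmul (mmul g (mscale l0 K)) (mscale (l / l0) (mmul (minv K) k))"
      using Y by (simp add: mmul_assoc)
    then show "Y \<in> edge (mmul g (mscale l0 K))" unfolding edge_def
      using Y assms Iwahori_mult Iwahori_minv by fastforce
  qed
qed



lemma alg0:
  fixes En H11 H12 H21 H22 P :: "'b::field"
  assumes "En \<noteq> 0" "H12 \<noteq> 0" "P \<noteq> 0" "dt = H11*H22 - H12*H21"
  shows "Mat2 H11 H12 H21 H22 = mmul (mmul (Mat2 0 (-1) En 0) (Mat2 P (- H22 / (En * H12)) 0 1))
           (mscale (- H12) (Mat2 (inverse P * dt / (En * (H12 * H12))) 0 (H11 / H12) 1))"
  using assms by (simp add: mmul_def mscale_def field_simps)

lemma alg1:
  fixes En H11 H12 H21 H22 P pi :: "'b::field"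
  assumes "En \<noteq> 0" "H11 \<noteq> 0" "P \<noteq> 0" "pi \<noteq> 0" "dt = H11*H22 - H12*H21"
  shows "Mat2 H11 H12 H21 H22 = mmul (mmul (mmul (Mat2 0 (-1) En 0) (Mat2 P (- H21 / (En * H11)) 0 1)) (Mat2 0 1 pi 0))
           (mscale (- H11 / pi) (Mat2 1 (H12 / H11) 0 (- (pi * dt) / (P * En * (H11 * H11)))))"
  using assms by (simp add: mmul_def mscale_def field_simps)

lemma K0_Iw:
  fixes En H11 H12 dt :: "'a::field fls"
  assumes "En \<noteq> 0" "H12 \<noteq> 0" "dt \<noteq> 0" "fls_subdegree dt = 0" "fls_subdegree En = - int N"
    "fls_subdegree H12 = - int dl" "H11 = 0 \<or> fls_subdegree H12 + 1 \<le> fls_subdegree H11"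
  shows "Mat2 (inverse (fls_X ^ (N + 2 * dl)) * dt / (En * (H12 * H12))) 0 (H11 / H12) 1 \<in> Iwahori"
proof -
  have s: "fls_subdegree (inverse (fls_X ^ (N + 2 * dl)) * dt / (En * (H12 * H12))) = 0"
    using assms by (simp add: fls_divide_subdegree)
  have nz: "inverse (fls_X ^ (N + 2 * dl)) * dt / (En * (H12 * H12)) \<noteq> 0"
    using assms by simp
  have p: "H11 / H12 \<in> piO_inf"
    using assms(7) proof
    assume "fls_subdegree H12 + 1 \<le> fls_subdegree H11"
    then show ?thesis using assms(2) unfolding piO_inf_def
      by (cases "H11 = 0") (auto simp: fls_divide_subdegree)
  qed (simp add: piO_inf_def)
  show ?thesis unfolding Iwahori_def using s nz p by (simp add: O_inf_def mdet_def)
qed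

lemma K1_Iw:
  fixes En H11 H12 dt :: "'a::field fls"
  assumes "En \<noteq> 0" "H11 \<noteq> 0" "dt \<noteq> 0" "fls_subdegree dt = 0" "fls_subdegree En = - int N"
    "fls_subdegree H11 = - int dl" "H12 = 0 \<or> fls_subdegree H11 \<le> fls_subdegree H12"
  shows "Mat2 1 (H12 / H11) 0 (- (fls_X * dt) / (fls_X ^ (N + 2 * dl + 1) * En * (H11 * H11))) \<in> Iwahori"
proof -
  have s: "fls_subdegree (- (fls_X * dt) / (fls_X ^ (N + 2 * dl + 1) * En * (H11 * H11))) = 0"
    using assms by (simp add: fls_divide_subdegree)
  have nz: "- (fls_X * dt) / (fls_X ^ (N + 2 * dl + 1) * En * (H11 * H11)) \<noteq> 0"
    using assms by simp
  have p: "H12 / H11 \<in> O_inf"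
    using assms(7) proof
    assume "fls_subdegree H11 \<le> fls_subdegree H12"
    then show ?thesis using assms(2) unfolding O_inf_def
      by (cases "H12 = 0") (auto simp: fls_divide_subdegree)
  qed (simp add: O_inf_def)
  show ?thesis unfolding Iwahori_def using s nz p by (simp add: O_inf_def piO_inf_def mdet_def)
qed



lemma delta_props:
  fixes n c d :: "'a::field_gcd poly"
  assumes ex: "\<exists>x y. (x, y) \<noteq> (0, 0) \<and> gcd (c * x + d * y) n = 1"
  shows "\<exists>x y. (x, y) \<noteq> (0, 0) \<and> gcd (c * x + d * y) n = 1 \<and> max (degree x) (degree y) = delta_n n c d"
    and "\<And>x y. (x, y) \<noteq> (0, 0) \<Longrightarrow> gcd (c * x + d * y) n = 1 \<Longrightarrow> delta_n n c d \<le> max (degree x) (degree y)"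
proof -
  define P where "P = (\<lambda>m. \<exists>x y. (x, y) \<noteq> (0, 0) \<and> gcd (c * x + d * y) n = 1 \<and> max (degree x) (degree y) = m)"
  have dd: "delta_n n c d = (LEAST m. P m)" unfolding delta_n_def P_def by (rule refl)
  have PI: "P (max (degree x) (degree y))" if "(x, y) \<noteq> (0, 0)" "gcd (c * x + d * y) n = 1" for x y
    unfolding P_def
  proof (intro exI)
    show "(x, y) \<noteq> (0, 0) \<and> gcd (c * x + d * y) n = 1 \<and> max (degree x) (degree y) = max (degree x) (degree y)"
      using that by simp
  qed
  from ex obtain x y where xy: "(x, y) \<noteq> (0, 0)" "gcd (c * x + d * y) n = 1" by (elim exE conjE)
  have "P (LEAST m. P m)" by (rule LeastI[of P, OF PI[OF xy]])
  then have "P (delta_n n c d)" unfolding dd .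
  then show "\<exists>x y. (x, y) \<noteq> (0, 0) \<and> gcd (c * x + d * y) n = 1 \<and> max (degree x) (degree y) = delta_n n c d"
    unfolding P_def .
  fix x y :: "'a poly"
  assume "(x, y) \<noteq> (0, 0)" "gcd (c * x + d * y) n = 1"
  from PI[OF this] show "delta_n n c d \<le> max (degree x) (degree y)" unfolding dd by (rule Least_le)
qed

lemma delta_coprime:
  fixes n c d x y :: "'a::field_gcd poly"
  assumes xy: "(x, y) \<noteq> (0, 0)" and g1: "gcd (c * x + d * y) n = 1"
    and mx: "max (degree x) (degree y) = delta_n n c d"
  shows "coprime x y"
proof -
  define g where "g = gcd x y"
  have gnz: "g \<noteq> 0" using xy unfolding g_def by auto
  obtain x' where x': "x = g * x'" unfolding g_def by (meson gcd_dvd1 dvdE)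
  obtain y' where y': "y = g * y'" unfolding g_def by (meson gcd_dvd2 dvdE)
  have xy': "(x', y') \<noteq> (0, 0)" using xy x' y' by auto
  have "coprime (g * (c * x' + d * y')) n" using g1 x' y'
    by (simp add: coprime_iff_gcd_eq_1 algebra_simps)
  then have g1': "gcd (c * x' + d * y') n = 1" by (simp add: coprime_iff_gcd_eq_1[symmetric])
  have exq: "\<exists>x y. (x, y) \<noteq> (0, 0) \<and> gcd (c * x + d * y) n = 1"
  proof (intro exI)
    show "(x', y') \<noteq> (0, 0) \<and> gcd (c * x' + d * y') n = 1" using xy' g1' by (rule conjI)
  qed
  have le: "delta_n n c d \<le> max (degree x') (degree y')"
    by (rule delta_props(2)[OF exq xy' g1'])
  have "max (degree x) (degree y) = degree g + max (degree x') (degree y')"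
  proof -
    have dx: "degree x = (if x' = 0 then 0 else degree g + degree x')"
      using x' gnz by (simp add: degree_mult_eq)
    have dy: "degree y = (if y' = 0 then 0 else degree g + degree y')"
      using y' gnz by (simp add: degree_mult_eq)
    show ?thesis using xy' unfolding dx dy by (cases "x' = 0"; cases "y' = 0") simp_all
  qed
  then have "degree g = 0" using le mx by linarith
  then have "is_unit g" using gnz by (simp add: is_unit_iff_degree)
  then show ?thesis unfolding g_def by (simp add: is_unit_gcd coprime_iff_gcd_eq_1)
qed

lemma choose_xy:
  fixes n c d :: "'a::field_gcd poly"
  assumes ex: "\<exists>x y. (x, y) \<noteq> (0, 0) \<and> gcd (c * x + d * y) n = 1"
  shows "\<exists>x y. coprime x y \<and> gcd (c * x + d * y) n = 1 \<and>
     (if eps_n n c d = 0 then x \<noteq> 0 \<and> degree x = delta_n n c d \<and> (y = 0 \<or> degree y < delta_n n c d)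
      else y \<noteq> 0 \<and> degree y = delta_n n c d \<and> (x = 0 \<or> degree x \<le> delta_n n c d))"
proof (cases "eps_n n c d = 0")
  case True
  then obtain x0 y0 where h: "x0 \<noteq> 0" "degree x0 = delta_n n c d" "y0 = 0 \<or> degree y0 < degree x0"
    "gcd (c * x0 + d * y0) n = 1"
    unfolding eps_n_def by (metis one_neq_zero)
  have m: "max (degree x0) (degree y0) = delta_n n c d" using h(2,3) by auto
  have nz: "(x0, y0) \<noteq> (0, 0)" using h(1) by simp
  have cp: "coprime x0 y0" by (rule delta_coprime[OF nz h(4) m])
  show ?thesis
    apply (rule exI[of _ x0], rule exI[of _ y0], intro conjI cp h(4))
    unfolding if_P[OF True]
    using h(1,2,3) by simp
next
  case False
  obtain x y where h: "(x, y) \<noteq> (0, 0)" "gcd (c * x + d * y) n = 1"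
    "max (degree x) (degree y) = delta_n n c d" using delta_props(1)[OF ex] by metis
  have cp: "coprime x y" using delta_coprime[OF h] .
  have yy: "y \<noteq> 0 \<and> degree y = delta_n n c d"
  proof (rule ccontr)
    assume a: "\<not> (y \<noteq> 0 \<and> degree y = delta_n n c d)"
    have "x \<noteq> 0" using a h(1) h(3) by (cases "x = 0") auto
    moreover have "degree x = delta_n n c d" using a h(3) by (cases "y = 0") auto
    moreover have "y = 0 \<or> degree y < degree x" using a h(3) by (cases "y = 0") auto
    ultimately have "\<exists>x0 y0. x0 \<noteq> 0 \<and> degree x0 = delta_n n c d
                     \<and> (y0 = 0 \<or> degree y0 < degree x0) \<and> gcd (c * x0 + d * y0) n = 1"
      using h(2) by - (rule exI[of _ x], rule exI[of _ y], intro conjI; assumption)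
    then have "eps_n n c d = 0" unfolding eps_n_def by (simp only: if_True)
    then show False using False by simp
  qed
  have dxle: "degree x \<le> delta_n n c d" using h(3) max.cobounded1[of "degree x" "degree y"] by (rule subst)
  show ?thesis
    apply (rule exI[of _ x], rule exI[of _ y], intro conjI cp h(2))
    unfolding if_not_P[OF False]
    using yy dxle by blast
qed


lemma act_edge: "act X (edge g) = edge (mmul X (g::'a::field fls mat2))"
  unfolding act_def edge_def by (auto simp: mmul_assoc image_iff)

lemma emb_mat_mmul: "emb_mat (mmul p q) = mmul (emb_mat p) (emb_mat (q::'a::field poly mat2))"
  by (simp add: emb_mat_def mmul_def)

theorem lemma4p2:
  fixes n :: "'a::{field_gcd,finite} poly" and \<gamma> :: "'a poly mat2"
  assumes "lead_coeff n = 1"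
    and "\<gamma> \<in> GL2A"
  shows "\<exists>(u::'a fls) \<gamma>0. \<gamma>0 \<in> Gamma0 n \<and>
           act (emb_mat \<gamma>0) (act (emb_mat \<gamma>) e0) =
           edge (mmul (mmul (w_n n)
                   (Mat2 (fls_X ^ (degree n + 2 * delta_n n (m21 \<gamma>) (m22 \<gamma>) + eps_n n (m21 \<gamma>) (m22 \<gamma>))) u 0 1))
                 (mpow (Mat2 0 1 fls_X 0) (eps_n n (m21 \<gamma>) (m22 \<gamma>))))"
proof -
  obtain a b c d where g: "\<gamma> = Mat2 a b c d" by (cases \<gamma>)
  define D where "D = a * d - b * c"
  have uD: "is_unit D" using assms(2) unfolding GL2A_def g D_def mdet_def by simp
  have D0: "D \<noteq> 0" using uD by auto
  have n0: "n \<noteq> 0" using assms(1) by auto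
  have ex: "\<exists>x y. (x, y) \<noteq> (0, 0) \<and> gcd (c * x + d * y) n = 1"
  proof (intro exI conjI)
    show "(-b, a) \<noteq> (0, 0)" using D0 unfolding D_def by auto
    have "c * - b + d * a = D" unfolding D_def by (simp add: algebra_simps)
    then show "gcd (c * - b + d * a) n = 1"
      using is_unit_left_imp_coprime[OF uD, of n] by (simp add: coprime_iff_gcd_eq_1)
  qed
  define dl where "dl = delta_n n c d"
  define ep where "ep = eps_n n c d"
  obtain x y where xy: "coprime x y" "gcd (c * x + d * y) n = 1"
    "if ep = 0 then x \<noteq> 0 \<and> degree x = dl \<and> (y = 0 \<or> degree y < dl)
      else y \<noteq> 0 \<and> degree y = dl \<and> (x = 0 \<or> degree x \<le> dl)"
    using choose_xy[OF ex] unfolding dl_def ep_def by metis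
  define s where "s = fst (bezout_coefficients x y)"
  define t where "t = snd (bezout_coefficients x y)"
  have st: "s * x + t * y = 1" unfolding s_def t_def bezout_coefficients_fst_snd
    using xy(1) by (simp add: coprime_iff_gcd_eq_1)
  define al where "al = c * x + d * y"
  define be where "be = - (a * x + b * y)"
  define R where "R = fst (bezout_coefficients al n)"
  define S where "S = snd (bezout_coefficients al n)"
  have RS: "R * al + S * n = 1" unfolding R_def S_def bezout_coefficients_fst_snd
    using xy(2) unfolding al_def by simp
  define P where "P = t * a - s * b"
  define Q where "Q = t * c - s * d"
  have PQ0: "al * P + be * Q = D * (s * x + t * y)"
    unfolding al_def be_def P_def Q_def D_def by (simp add: algebra_simps)
  have PQ: "al * P + be * Q = D" using PQ0 st by simp
  define \<gamma>0 where "\<gamma>0 = Mat2 al be (- (n * (S * Q))) (D * R + n * S * P)"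
  have det0: "mdet \<gamma>0 = D * (R * al + S * n) + n * S * (al * P + be * Q - D)"
    unfolding \<gamma>0_def mdet_def by (simp add: algebra_simps)
  have G0: "\<gamma>0 \<in> Gamma0 n"
    unfolding Gamma0_def GL2A_def using det0 RS PQ uD by (simp add: \<gamma>0_def)
  define h where "h = mmul \<gamma>0 \<gamma>"
  have h11: "m11 h = D * y" unfolding h_def \<gamma>0_def g al_def be_def D_def mmul_def
    by (simp add: algebra_simps)
  have h12: "m12 h = - (D * x)" unfolding h_def \<gamma>0_def g al_def be_def D_def mmul_def
    by (simp add: algebra_simps)
  have dg0: "mdet \<gamma>0 = D" using det0 RS PQ by simp
  have hdet: "mdet h = D * D" unfolding h_def mdet_mmul dg0
    by (simp add: g mdet_def D_def)
  have LHS: "act (emb_mat \<gamma>0) (act (emb_mat \<gamma>) e0) = edge (emb_mat h)"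
    unfolding e0_def act_edge h_def emb_mat_mmul by (simp add: mmul_assoc)
  define En where "En = embA n"
  define H11 where "H11 = embA (m11 h)"
  define H12 where "H12 = embA (m12 h)"
  define H21 where "H21 = embA (m21 h)"
  define H22 where "H22 = embA (m22 h)"
  define dt where "dt = embA (D * D)"
  have Hm: "emb_mat h = Mat2 H11 H12 H21 H22" unfolding emb_mat_def H11_def H12_def H21_def H22_def by simp
  have dtH: "dt = H11 * H22 - H12 * H21"
    unfolding dt_def H11_def H12_def H21_def H22_def hdet[symmetric] mdet_def by simp
  have En0: "En \<noteq> 0" "fls_subdegree En = - int (degree n)" using n0 by (simp_all add: En_def embA_subdegree)
  have dt0: "dt \<noteq> 0" "fls_subdegree dt = 0" using D0 uD
    by (simp_all add: dt_def embA_subdegree is_unit_iff_degree degree_mult_eq)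
  have eD: "embA D \<noteq> 0" "fls_subdegree (embA D) = 0" using D0 uD
    by (simp_all add: embA_subdegree is_unit_iff_degree)
  have m2: "m21 \<gamma> = c" "m22 \<gamma> = d" by (simp_all add: g)
  show ?thesis
  proof (cases "ep = 0")
    case True
    have x: "x \<noteq> 0" "degree x = dl" "y = 0 \<or> degree y < dl" using xy(3) True by auto
    have H12s: "H12 \<noteq> 0" "fls_subdegree H12 = - int dl"
      using x eD unfolding H12_def h12 by (simp_all add: embA_subdegree)
    have H11s: "H11 = 0 \<or> fls_subdegree H12 + 1 \<le> fls_subdegree H11"
    proof (cases "y = 0")
      case False
      then have "fls_subdegree (embA D * embA y) = - int (degree y)"
        using eD by (simp add: embA_subdegree)
      then show ?thesis using x(3) H12s False unfolding H11_def h11 by simp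
    qed (simp add: H11_def h11)
    have K: "Mat2 (inverse (fls_X ^ (degree n + 2 * dl)) * dt / (En * (H12 * H12))) 0 (H11 / H12) 1 \<in> Iwahori"
      by (rule K0_Iw[OF En0(1) H12s(1) dt0 En0(2) H12s(2) H11s])
    have E: "emb_mat h = mmul (mmul (w_n n) (Mat2 (fls_X ^ (degree n + 2 * dl)) (- H22 / (En * H12)) 0 1))
           (mscale (- H12) (Mat2 (inverse (fls_X ^ (degree n + 2 * dl)) * dt / (En * (H12 * H12))) 0 (H11 / H12) 1))"
      unfolding Hm w_n_def En_def[symmetric] by (rule alg0[OF En0(1) H12s(1) _ dtH]) simp
    show ?thesis
      apply (intro exI[of _ "- H22 / (En * H12)"] exI[of _ \<gamma>0] conjI G0)
      unfolding LHS m2 dl_def[symmetric] ep_def[symmetric] True E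
      using edge_shift[OF _ K] H12s by simp
  next
    case False
    then have ep1: "ep = 1" unfolding ep_def eps_n_def by (simp split: if_splits)
    have y: "y \<noteq> 0" "degree y = dl" "x = 0 \<or> degree x \<le> dl" using xy(3) False by auto
    have H11s: "H11 \<noteq> 0" "fls_subdegree H11 = - int dl"
      using y eD unfolding H11_def h11 by (simp_all add: embA_subdegree)
    have H12s: "H12 = 0 \<or> fls_subdegree H11 \<le> fls_subdegree H12"
    proof (cases "x = 0")
      case False
      then have "fls_subdegree (embA D * embA x) = - int (degree x)"
        using eD by (simp add: embA_subdegree)
      then show ?thesis using y(3) H11s False unfolding H12_def h12 by simp
    qed (simp add: H12_def h12)
    have K: "Mat2 1 (H12 / H11) 0 (- (fls_X * dt) / (fls_X ^ (degree n + 2 * dl + 1) * En * (H11 * H11))) \<in> Iwahori"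
      by (rule K1_Iw[OF En0(1) H11s(1) dt0 En0(2) H11s(2) H12s])
    have E: "emb_mat h = mmul (mmul (mmul (w_n n) (Mat2 (fls_X ^ (degree n + 2 * dl + 1)) (- H21 / (En * H11)) 0 1)) (Mat2 0 1 fls_X 0))
           (mscale (- H11 / fls_X) (Mat2 1 (H12 / H11) 0 (- (fls_X * dt) / (fls_X ^ (degree n + 2 * dl + 1) * En * (H11 * H11)))))"
      unfolding Hm w_n_def En_def[symmetric] by (rule alg1[OF En0(1) H11s(1) _ _ dtH]) simp_all
    have M: "mpow (Mat2 0 1 fls_X 0) 1 = (Mat2 0 1 (fls_X::'a fls) 0)" by simp
    show ?thesis
      apply (intro exI[of _ "- H21 / (En * H11)"] exI[of _ \<gamma>0] conjI G0)
      unfolding LHS m2 dl_def[symmetric] ep_def[symmetric] ep1 M E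
      by (rule edge_shift[OF _ K]) (metis H11s(1) divide_eq_0_iff fls_X_nonzero neg_equal_0_iff_equal)
  qed
qed

end
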